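(* Let $E:\mathcal D(\mathcal H)\to[0,\infty)$ be a convex weak entanglement measure, and let $D$ be a contractive distance, convex in each argument, such that for every state the infimum defining $E_D$ is attained by some separable state. Let $\rho$ be a state with $E_D(\rho)>0$ and let $0\le\epsilon\le E_D(\rho)$. Then $$\inf\{E(\tau)\mid \tau\in\mathcal D(\mathcal H),\ E_D(\tau)=E_D(\rho)-\epsilon\}\ \le\ E^{(D)}_\epsilon(\rho)\ \le\ \Big(1-\frac{\epsilon}{E_D(\rho)}\Big)E(\rho).$$
   Context: $\mathcal H$ is a finite-dimensional multipartite Hilbert space, $\mathcal D(\mathcal H)$ its density matrices, $\mathcal S$ the separable states (convex combinations of product states). A distance $D$ is a metric on density matrices; convex in each argument means $D(p\rho_1+(1-p)\rho_2,\sigma)\le pD(\rho_1,\sigma)+(1-p)D(\rho_2,\sigma)$; contractive means $D(\Lambda[\rho],\Lambda[\sigma])\le D(\rho,\sigma)$ for every CPT map $\Lambda$. $E$ is a weak entanglement measure if $E(\rho)=0$ for all separable $\rho$ and $E(\Lambda_{\mathrm{LOCC}}[\rho])\le E(\rho)$ for every trace-preserving LOCC operation; convex means $E(p\rho_1+(1-p)\rho_2)\le pE(\rho_1)+(1-p)E(\rho_2)$. $E_D(\rho)=\inf_{\sigma\in\mathcal S}D(\rho,\sigma)$. For $\epsilon\ge0$, $E^{(D)}_\epsilon(\rho)=\inf\{E(\sigma)\mid \sigma\in\mathcal D(\mathcal H),\ D(\rho,\sigma)\le\epsilon\}$. *)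

theory Defs
  imports "HOL-Analysis.Analysis"
begin

text \<open>An operator on the Hilbert space with orthonormal basis indexed by a finite set I is
  represented by its matrix  A :: 'a => 'a => complex, required to vanish outside I x I.\<close>

type_synonym 'a cmat = "'a \<Rightarrow> 'a \<Rightarrow> complex"

definition is_op_on :: "'a set \<Rightarrow> 'a cmat \<Rightarrow> bool" where
  "is_op_on I A \<longleftrightarrow> (\<forall>i j. i \<notin> I \<or> j \<notin> I \<longrightarrow> A i j = 0)"

definition tr_on :: "'a set \<Rightarrow> 'a cmat \<Rightarrow> complex" where
  "tr_on I A = (\<Sum>i\<in>I. A i i)"

definition psd_on :: "'a set \<Rightarrow> 'a cmat \<Rightarrow> bool" where
  "psd_on I A \<longleftrightarrow> (\<forall>v :: 'a \<Rightarrow> complex.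
      0 \<le> Re (\<Sum>i\<in>I. \<Sum>j\<in>I. cnj (v i) * A i j * v j) \<and>
      Im (\<Sum>i\<in>I. \<Sum>j\<in>I. cnj (v i) * A i j * v j) = 0)"

definition density_on :: "'a set \<Rightarrow> 'a cmat \<Rightarrow> bool" where
  "density_on I A \<longleftrightarrow> is_op_on I A \<and> psd_on I A \<and> tr_on I A = 1"

definition mmul_on :: "'a set \<Rightarrow> 'a cmat \<Rightarrow> 'a cmat \<Rightarrow> 'a cmat" where
  "mmul_on I A B = (\<lambda>i j. \<Sum>k\<in>I. A i k * B k j)"

definition adj :: "'a cmat \<Rightarrow> 'a cmat" where
  "adj A = (\<lambda>i j. cnj (A j i))"

definition id_on :: "'a set \<Rightarrow> 'a cmat" where
  "id_on I = (\<lambda>i j. if i \<in> I \<and> i = j then 1 else 0)"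

definition mix :: "real \<Rightarrow> 'a cmat \<Rightarrow> 'a cmat \<Rightarrow> 'a cmat" where
  "mix p A B = (\<lambda>i j. complex_of_real p * A i j + complex_of_real (1 - p) * B i j)"

text \<open>The parties' local dimensions are the list ds; basis vectors of the composite space
  are indexed by tuples (lists) i with i!k < ds!k.\<close>

definition Idx :: "nat list \<Rightarrow> nat list set" where
  "Idx ds = {i. length i = length ds \<and> (\<forall>k<length ds. i ! k < ds ! k)}"

definition density :: "nat list \<Rightarrow> nat list cmat \<Rightarrow> bool" where
  "density ds \<rho> \<longleftrightarrow> density_on (Idx ds) \<rho>"

definition product_state :: "nat list \<Rightarrow> nat list cmat \<Rightarrow> bool" where
  "product_state ds \<rho> \<longleftrightarrow> (\<exists>\<sigma> :: nat \<Rightarrow> nat cmat.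
      (\<forall>k<length ds. density_on {..<ds ! k} (\<sigma> k)) \<and>
      \<rho> = (\<lambda>i j. if i \<in> Idx ds \<and> j \<in> Idx ds
                  then (\<Prod>k<length ds. \<sigma> k (i ! k) (j ! k)) else 0))"

definition separable :: "nat list \<Rightarrow> nat list cmat \<Rightarrow> bool" where
  "separable ds \<rho> \<longleftrightarrow> (\<exists>(n::nat) (p :: nat \<Rightarrow> real) (\<sigma> :: nat \<Rightarrow> nat list cmat).
      (\<forall>k<n. 0 \<le> p k \<and> product_state ds (\<sigma> k)) \<and> (\<Sum>k<n. p k) = 1 \<and>
      \<rho> = (\<lambda>i j. \<Sum>k<n. complex_of_real (p k) * \<sigma> k i j))"

text \<open>Extension Lambda (x) id_n of a map on operators of H to operators on H (x) C^n.\<close>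
definition ampl :: "(nat list cmat \<Rightarrow> nat list cmat) \<Rightarrow> (nat list \<times> nat) cmat \<Rightarrow> (nat list \<times> nat) cmat" where
  "ampl \<Lambda> X = (\<lambda>(i, a) (j, b). \<Lambda> (\<lambda>i' j'. X (i', a) (j', b)) i j)"

definition cpt :: "nat list \<Rightarrow> (nat list cmat \<Rightarrow> nat list cmat) \<Rightarrow> bool" where
  "cpt ds \<Lambda> \<longleftrightarrow>
     (\<forall>X. is_op_on (Idx ds) X \<longrightarrow> is_op_on (Idx ds) (\<Lambda> X)) \<and>
     (\<forall>(a::complex) (b::complex) X Y. is_op_on (Idx ds) X \<longrightarrow> is_op_on (Idx ds) Y \<longrightarrow>
        \<Lambda> (\<lambda>i j. a * X i j + b * Y i j) = (\<lambda>i j. a * \<Lambda> X i j + b * \<Lambda> Y i j)) \<and>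
     (\<forall>X. is_op_on (Idx ds) X \<longrightarrow> tr_on (Idx ds) (\<Lambda> X) = tr_on (Idx ds) X) \<and>
     (\<forall>(n::nat) X. is_op_on (Idx ds \<times> {..<n}) X \<longrightarrow> psd_on (Idx ds \<times> {..<n}) X \<longrightarrow>
        psd_on (Idx ds \<times> {..<n}) (ampl \<Lambda> X))"

text \<open>Local operator K acting on party k, i.e. id (x) ... (x) K (x) ... (x) id.\<close>
definition lift :: "nat list \<Rightarrow> nat \<Rightarrow> nat cmat \<Rightarrow> nat list cmat" where
  "lift ds k K = (\<lambda>i j. if i \<in> Idx ds \<and> j \<in> Idx ds \<and> (\<forall>l<length ds. l \<noteq> k \<longrightarrow> i ! l = j ! l)
                      then K (i ! k) (j ! k) else 0)"

text \<open>A local instrument at party k with outcomes j < J, each outcome j given by Kraus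
  operators K j m (m < M), summing to a trace-preserving operation.\<close>
definition local_instrument :: "nat list \<Rightarrow> nat \<Rightarrow> nat \<Rightarrow> nat \<Rightarrow> (nat \<Rightarrow> nat \<Rightarrow> nat cmat) \<Rightarrow> bool" where
  "local_instrument ds k J M K \<longleftrightarrow> k < length ds \<and>
     (\<forall>j<J. \<forall>m<M. is_op_on {..<ds ! k} (K j m)) \<and>
     (\<lambda>a b. \<Sum>j<J. \<Sum>m<M. mmul_on {..<ds ! k} (adj (K j m)) (K j m) a b) = id_on {..<ds ! k}"

text \<open>LOCC: the identity, and: a party performs a local instrument, broadcasts the outcome j,
  after which an LOCC operation depending on j is performed.\<close>
inductive_set LOCC :: "nat list \<Rightarrow> (nat list cmat \<Rightarrow> nat list cmat) set" for ds where
  LOCC_id: "(\<lambda>X. X) \<in> LOCC ds"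
| LOCC_step: "\<lbrakk>local_instrument ds k J M K; \<forall>j<J. \<Lambda>s j \<in> LOCC ds\<rbrakk> \<Longrightarrow>
    (\<lambda>X i i'. \<Sum>j<J. \<Lambda>s j
        (\<lambda>a b. \<Sum>m<M. mmul_on (Idx ds) (mmul_on (Idx ds) (lift ds k (K j m)) X)
                                     (adj (lift ds k (K j m))) a b) i i') \<in> LOCC ds"

definition weak_entanglement_measure :: "nat list \<Rightarrow> (nat list cmat \<Rightarrow> real) \<Rightarrow> bool" where
  "weak_entanglement_measure ds E \<longleftrightarrow>
     (\<forall>\<rho>. separable ds \<rho> \<longrightarrow> E \<rho> = 0) \<and>
     (\<forall>\<Lambda>\<in>LOCC ds. \<forall>\<rho>. density ds \<rho> \<longrightarrow> E (\<Lambda> \<rho>) \<le> E \<rho>)"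

definition convex_measure :: "nat list \<Rightarrow> (nat list cmat \<Rightarrow> real) \<Rightarrow> bool" where
  "convex_measure ds E \<longleftrightarrow> (\<forall>\<rho>1 \<rho>2 p. density ds \<rho>1 \<longrightarrow> density ds \<rho>2 \<longrightarrow> 0 \<le> p \<longrightarrow> p \<le> 1 \<longrightarrow>
      E (mix p \<rho>1 \<rho>2) \<le> p * E \<rho>1 + (1 - p) * E \<rho>2)"

definition distance :: "nat list \<Rightarrow> (nat list cmat \<Rightarrow> nat list cmat \<Rightarrow> real) \<Rightarrow> bool" where
  "distance ds D \<longleftrightarrow> (\<forall>\<rho> \<sigma> \<tau>. density ds \<rho> \<longrightarrow> density ds \<sigma> \<longrightarrow> density ds \<tau> \<longrightarrow>
      0 \<le> D \<rho> \<sigma> \<and> (D \<rho> \<sigma> = 0 \<longleftrightarrow> \<rho> = \<sigma>) \<and> D \<rho> \<sigma> = D \<sigma> \<rho> \<and> D \<rho> \<tau> \<le> D \<rho> \<sigma> + D \<sigma> \<tau>)"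

definition convex_each_arg :: "nat list \<Rightarrow> (nat list cmat \<Rightarrow> nat list cmat \<Rightarrow> real) \<Rightarrow> bool" where
  "convex_each_arg ds D \<longleftrightarrow> (\<forall>\<rho>1 \<rho>2 \<sigma> p. density ds \<rho>1 \<longrightarrow> density ds \<rho>2 \<longrightarrow> density ds \<sigma> \<longrightarrow>
      0 \<le> p \<longrightarrow> p \<le> 1 \<longrightarrow>
      D (mix p \<rho>1 \<rho>2) \<sigma> \<le> p * D \<rho>1 \<sigma> + (1 - p) * D \<rho>2 \<sigma> \<and>
      D \<sigma> (mix p \<rho>1 \<rho>2) \<le> p * D \<sigma> \<rho>1 + (1 - p) * D \<sigma> \<rho>2)"

definition contractive :: "nat list \<Rightarrow> (nat list cmat \<Rightarrow> nat list cmat \<Rightarrow> real) \<Rightarrow> bool" where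
  "contractive ds D \<longleftrightarrow> (\<forall>\<Lambda> \<rho> \<sigma>. cpt ds \<Lambda> \<longrightarrow> density ds \<rho> \<longrightarrow> density ds \<sigma> \<longrightarrow>
      D (\<Lambda> \<rho>) (\<Lambda> \<sigma>) \<le> D \<rho> \<sigma>)"

definition E_D :: "nat list \<Rightarrow> (nat list cmat \<Rightarrow> nat list cmat \<Rightarrow> real) \<Rightarrow> nat list cmat \<Rightarrow> real" where
  "E_D ds D \<rho> = Inf {D \<rho> \<sigma> | \<sigma>. separable ds \<sigma>}"

definition E_eps :: "nat list \<Rightarrow> (nat list cmat \<Rightarrow> real) \<Rightarrow> (nat list cmat \<Rightarrow> nat list cmat \<Rightarrow> real)
                     \<Rightarrow> real \<Rightarrow> nat list cmat \<Rightarrow> real" where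
  "E_eps ds E D \<epsilon> \<rho> = Inf {E \<sigma> | \<sigma>. density ds \<sigma> \<and> D \<rho> \<sigma> \<le> \<epsilon>}"

end

theory Submission
  imports Defs
begin



definition qf :: "'a set \<Rightarrow> 'a cmat \<Rightarrow> ('a \<Rightarrow> complex) \<Rightarrow> complex" where
  "qf I A v = (\<Sum>i\<in>I. \<Sum>j\<in>I. cnj (v i) * A i j * v j)"

lemma psd_qf: "psd_on I A \<longleftrightarrow> (\<forall>v. 0 \<le> Re (qf I A v) \<and> Im (qf I A v) = 0)"
  by (simp add: psd_on_def qf_def)

lemma cnj_mult_self: "cnj z * z = of_real ((cmod z)\<^sup>2)"
  by (metis complex_norm_square mult.commute)

lemma gram_psd:
  assumes "finite M" "\<forall>a\<in>I. \<forall>b\<in>I. A a b = (\<Sum>m\<in>M. cnj (u m a) * u m b)"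
  shows "psd_on I A"
  unfolding psd_qf
proof
  fix v
  have "qf I A v = (\<Sum>i\<in>I. \<Sum>j\<in>I. \<Sum>m\<in>M. cnj (u m i * v i) * (u m j * v j))"
    unfolding qf_def using assms(2)
    by (intro sum.cong refl) (simp add: sum_distrib_left sum_distrib_right mult_ac)
  also have "\<dots> = (\<Sum>i\<in>I. \<Sum>m\<in>M. \<Sum>j\<in>I. cnj (u m i * v i) * (u m j * v j))"
    by (intro sum.cong refl sum.swap)
  also have "\<dots> = (\<Sum>m\<in>M. \<Sum>i\<in>I. \<Sum>j\<in>I. cnj (u m i * v i) * (u m j * v j))"
    by (rule sum.swap)
  also have "\<dots> = (\<Sum>m\<in>M. cnj (\<Sum>i\<in>I. u m i * v i) * (\<Sum>j\<in>I. u m j * v j))"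
    by (intro sum.cong refl) (simp only: cnj_sum sum_product)
  also have "\<dots> = (\<Sum>m\<in>M. of_real ((cmod (\<Sum>j\<in>I. u m j * v j))\<^sup>2))"
    by (intro sum.cong refl) (rule cnj_mult_self)
  finally have eq: "qf I A v = of_real (\<Sum>m\<in>M. (cmod (\<Sum>j\<in>I. u m j * v j))\<^sup>2)" by simp
  show "0 \<le> Re (qf I A v) \<and> Im (qf I A v) = 0"
    unfolding eq by (simp add: sum_nonneg)
qed

lemma qf_supp:
  assumes "finite I" "S \<subseteq> I" "\<forall>x\<in>I-S. v x = 0"
  shows "qf I A v = qf S A v"
proof -
  have "qf I A v = (\<Sum>i\<in>I. \<Sum>j\<in>S. cnj (v i) * A i j * v j)"
    unfolding qf_def
  proof (rule sum.cong[OF refl])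
    fix i assume "i \<in> I"
    show "(\<Sum>j\<in>I. cnj (v i) * A i j * v j) = (\<Sum>j\<in>S. cnj (v i) * A i j * v j)"
      using assms by (intro sum.mono_neutral_right) auto
  qed
  also have "\<dots> = qf S A v"
    unfolding qf_def using assms by (intro sum.mono_neutral_right) auto
  finally show ?thesis .
qed

lemma qf_cong: "(\<And>x. x\<in>I \<Longrightarrow> v x = w x) \<Longrightarrow> qf I A v = qf I A w"
  unfolding qf_def by (intro sum.cong refl) auto

lemma qf_two:
  assumes "finite I" "a\<in>I" "b\<in>I" "a\<noteq>b"
  shows "qf I A (\<lambda>x. if x = a then \<alpha> else if x = b then \<beta> else 0) =
     cnj \<alpha> * A a a * \<alpha> + cnj \<alpha> * A a b * \<beta> + cnj \<beta> * A b a * \<alpha> + cnj \<beta> * A b b * \<beta>"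
proof -
  have "qf I A (\<lambda>x. if x = a then \<alpha> else if x = b then \<beta> else 0) =
        qf {a,b} A (\<lambda>x. if x = a then \<alpha> else if x = b then \<beta> else 0)"
    using assms by (intro qf_supp) auto
  also have "\<dots> = cnj \<alpha> * A a a * \<alpha> + cnj \<alpha> * A a b * \<beta> + cnj \<beta> * A b a * \<alpha> + cnj \<beta> * A b b * \<beta>" using assms by (simp add: qf_def)
  finally show ?thesis .
qed

lemma psd_diag:
  assumes "finite I" "psd_on I A" "a \<in> I"
  shows "A a a = of_real (Re (A a a))" "0 \<le> Re (A a a)"
proof -
  have "qf I A (\<lambda>x. if x = a then 1 else 0) = qf {a} A (\<lambda>x. if x = a then 1 else 0)"
    using assms by (intro qf_supp) auto
  also have "\<dots> = A a a" by (simp add: qf_def)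
  finally have "qf I A (\<lambda>x. if x = a then 1 else 0) = A a a" .
  moreover have "0 \<le> Re (qf I A (\<lambda>x. if x = a then 1 else 0)) \<and> Im (qf I A (\<lambda>x. if x = a then 1 else 0)) = 0"
    using assms(2) unfolding psd_qf by blast
  ultimately have "0 \<le> Re (A a a)" "Im (A a a) = 0" by simp_all
  then show "A a a = of_real (Re (A a a))" "0 \<le> Re (A a a)"
    by (simp_all add: complex_eq_iff)
qed

lemma psd_herm:
  assumes "finite I" "psd_on I A" "a \<in> I" "b \<in> I"
  shows "A b a = cnj (A a b)"
proof (cases "a = b")
  case True
  then show ?thesis using psd_diag[OF assms(1,2,3)]
    by (metis complex_cnj_complex_of_real)
next
  case False
  have "Im (qf I A (\<lambda>x. if x = a then 1 else if x = b then 1 else 0)) = 0"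
    using assms(2) by (simp add: psd_qf)
  then have 1: "Im (A a a + A a b + A b a + A b b) = 0"
    using qf_two[OF assms(1,3,4) False, of A 1 1] by simp
  have "Im (qf I A (\<lambda>x. if x = a then 1 else if x = b then \<i> else 0)) = 0"
    using assms(2) by (simp add: psd_qf)
  then have 2: "Im (A a a + A a b * \<i> - \<i> * A b a + A b b) = 0"
    using qf_two[OF assms(1,3,4) False, of A 1 \<i>] by (simp add: algebra_simps)
  have d1: "Im (A a a) = 0" "Im (A b b) = 0"
    using psd_diag[OF assms(1,2,3)] psd_diag[OF assms(1,2,4)]
    by (metis Im_complex_of_real)+
  show ?thesis using 1 2 d1 by (intro complex_eqI) auto
qed

lemma psd_zero_row:
  assumes "finite I" "psd_on I A" "a \<in> I" "b \<in> I" "A a a = 0"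
  shows "A a b = 0"
proof (rule ccontr)
  assume nz: "A a b \<noteq> 0"
  then have ab: "a \<noteq> b" using assms by auto
  define z where "z = A a b"
  define q where "q = (cmod z)\<^sup>2"
  have qpos: "q > 0" using nz by (simp add: q_def z_def)
  define r where "r = (Re (A b b) + 1) / (2 * q)"
  define t where "t = - of_real r * z"
  have h: "A b a = cnj z" using psd_herm[OF assms(1-4)] z_def by simp
  have "qf I A (\<lambda>x. if x = a then t else if x = b then 1 else 0) =
        cnj t * z + cnj z * t + A b b"
    using qf_two[OF assms(1,3,4) ab, of A t 1] assms(5) h z_def by simp
  also have "\<dots> = - of_real (2 * r * q) + A b b"
    unfolding t_def q_def by (simp add: complex_norm_square[symmetric] algebra_simps)
  finally have e: "qf I A (\<lambda>x. if x = a then t else if x = b then 1 else 0) = - of_real (2 * r * q) + A b b" .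
  have "0 \<le> Re (qf I A (\<lambda>x. if x = a then t else if x = b then 1 else 0))"
    using assms(2) by (simp add: psd_qf)
  then have "0 \<le> - (2 * r * q) + Re (A b b)" using e by simp
  moreover have "2 * r * q = Re (A b b) + 1" using qpos by (simp add: r_def)
  ultimately show False by simp
qed



lemma psd_schur:
  assumes fin: "finite F" and a0: "a0 \<notin> F" and psd: "psd_on (insert a0 F) A"
    and cpos: "Re (A a0 a0) > 0"
  shows "psd_on F (\<lambda>a b. A a b - A a a0 * A a0 b / A a0 a0)"
  unfolding psd_qf
proof
  fix w
  let ?I = "insert a0 F"
  define c where "c = A a0 a0"
  have fI: "finite ?I" using fin by simp
  have c: "c = of_real (Re c)" unfolding c_def by (rule psd_diag(1)[OF fI psd]) simp
  have cnz: "c \<noteq> 0" using cpos c_def by auto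
  define s where "s = (\<Sum>b\<in>F. A a0 b * w b)"
  define v where "v = (\<lambda>x. if x = a0 then - s / c else w x)"
  have herm: "\<And>a. a \<in> F \<Longrightarrow> A a a0 = cnj (A a0 a)"
    by (rule psd_herm[OF fI psd]) simp_all
  have cs: "(\<Sum>i\<in>F. cnj (w i) * A i a0) = cnj s"
    unfolding s_def cnj_sum by (intro sum.cong refl) (simp add: herm mult.commute)
  have cc: "cnj c = c" using c by (metis complex_cnj_complex_of_real)
  have vF: "\<And>x. x \<in> F \<Longrightarrow> v x = w x" using a0 unfolding v_def by auto
  have v0: "v a0 = - s / c" by (simp add: v_def)
  have stepA: "qf ?I A v = cnj (v a0) * c * v a0 + (\<Sum>j\<in>F. cnj (v a0) * A a0 j * v j)
      + ((\<Sum>i\<in>F. cnj (v i) * A i a0 * v a0) + (\<Sum>i\<in>F. \<Sum>j\<in>F. cnj (v i) * A i j * v j))"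
    unfolding qf_def c_def using fin a0 by (simp add: sum.distrib)
  have t2: "(\<Sum>j\<in>F. cnj (v a0) * A a0 j * v j) = cnj (v a0) * s"
    unfolding s_def sum_distrib_left by (intro sum.cong refl) (simp add: vF mult.assoc)
  have t3: "(\<Sum>i\<in>F. cnj (v i) * A i a0 * v a0) = cnj s * v a0"
    unfolding cs[symmetric] sum_distrib_right by (intro sum.cong refl) (simp add: vF)
  have t4: "(\<Sum>i\<in>F. \<Sum>j\<in>F. cnj (v i) * A i j * v j) = qf F A w"
    unfolding qf_def by (intro sum.cong refl) (simp add: vF)
  have cv0: "cnj (v a0) = - cnj s / c" using cc by (simp add: v0)
  have "qf ?I A v = (- cnj s / c) * c * (- s / c) + (- cnj s / c) * s + (cnj s * (- s / c) + qf F A w)"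
    unfolding stepA t2 t3 t4 unfolding cv0 by (simp only: v0)
  also have "\<dots> = qf F A w - cnj s * s / c"
    using cnz by (simp add: field_simps)
  finally have e1: "qf ?I A v = qf F A w - cnj s * s / c" .
  have "qf F (\<lambda>a b. A a b - A a a0 * A a0 b / A a0 a0) w
      = (\<Sum>i\<in>F. \<Sum>j\<in>F. cnj (w i) * A i j * w j - (cnj (w i) * A i a0) * (A a0 j * w j) / c)"
    unfolding qf_def c_def
    by (intro sum.cong refl) (simp add: right_diff_distrib left_diff_distrib mult.assoc)
  also have "\<dots> = qf F A w - (\<Sum>i\<in>F. \<Sum>j\<in>F. (cnj (w i) * A i a0) * (A a0 j * w j)) / c"
    unfolding qf_def by (simp add: sum_subtractf sum_divide_distrib)
  also have "\<dots> = qf F A w - ((\<Sum>i\<in>F. cnj (w i) * A i a0) * (\<Sum>j\<in>F. A a0 j * w j)) / c"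
    by (simp only: sum_product)
  also have "\<dots> = qf F A w - cnj s * s / c"
    by (simp only: cs s_def[symmetric])
  finally have e2: "qf F (\<lambda>a b. A a b - A a a0 * A a0 b / A a0 a0) w = qf ?I A v"
    using e1 by simp
  show "0 \<le> Re (qf F (\<lambda>a b. A a b - A a a0 * A a0 b / A a0 a0) w) \<and>
        Im (qf F (\<lambda>a b. A a b - A a a0 * A a0 b / A a0 a0) w) = 0"
    unfolding e2 using psd by (simp add: psd_qf)
qed
lemma psd_restrict:
  assumes fin: "finite F" and psd: "psd_on (insert a0 F) A"
  shows "psd_on F A"
  unfolding psd_qf
proof
  fix w
  define v where "v = (\<lambda>x. if x \<in> F then w x else (0::complex))"
  have "qf (insert a0 F) A v = qf F A v" using fin by (intro qf_supp) (auto simp: v_def)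
  also have "\<dots> = qf F A w" by (intro qf_cong) (simp add: v_def)
  finally show "0 \<le> Re (qf F A w) \<and> Im (qf F A w) = 0"
    using psd by (metis psd_qf)
qed

lemma cholesky:
  assumes "finite I" "psd_on I A"
  shows "\<exists>(n::nat) u. \<forall>a\<in>I. \<forall>b\<in>I. A a b = (\<Sum>m<n. cnj (u m a) * u m b)"
  using assms
proof (induction I arbitrary: A rule: finite_induct)
  case empty
  then show ?case by auto
next
  case (insert a0 F)
  let ?I = "insert a0 F"
  have fI: "finite ?I" using insert by simp
  have herm: "\<And>a b. a \<in> ?I \<Longrightarrow> b \<in> ?I \<Longrightarrow> A b a = cnj (A a b)"
    using psd_herm[OF fI insert.prems] by blast
  have cdiag1: "A a0 a0 = of_real (Re (A a0 a0))"
    by (rule psd_diag(1)[OF fI insert.prems]) simp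
  have cdiag2: "0 \<le> Re (A a0 a0)"
    by (rule psd_diag(2)[OF fI insert.prems]) simp
  show ?case
  proof (cases "Re (A a0 a0) = 0")
    case True
    then have z: "A a0 a0 = 0" using cdiag1 by (metis of_real_0)
    have row: "\<And>b. b \<in> ?I \<Longrightarrow> A a0 b = 0"
      using psd_zero_row[OF fI insert.prems _ _ z] by simp
    have col: "\<And>b. b \<in> ?I \<Longrightarrow> A b a0 = 0"
      using row herm by (metis complex_cnj_zero insertI1)
    obtain n :: nat and u where nu: "\<forall>a\<in>F. \<forall>b\<in>F. A a b = (\<Sum>m<n. cnj (u m a) * u m b)"
      using insert.IH[OF psd_restrict[OF insert.hyps(1) insert.prems]] by blast
    define u' where "u' = (\<lambda>m x. if x = a0 then 0 else u m x)"
    have "A a b = (\<Sum>m<n. cnj (u' m a) * u' m b)" if ab: "a\<in>?I" "b\<in>?I" for a b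
    proof (cases "a = a0 \<or> b = a0")
      case True then show ?thesis using row col ab by (auto simp: u'_def)
    next
      case False then have "a\<in>F" "b\<in>F" "a\<noteq>a0" "b\<noteq>a0" using ab by auto
      then show ?thesis using nu by (simp add: u'_def)
    qed
    then show ?thesis by blast
  next
    case False
    define c where "c = Re (A a0 a0)"
    have cpos: "c > 0" using False cdiag2 unfolding c_def by linarith
    have Ac: "A a0 a0 = of_real c" unfolding c_def by (rule cdiag1)
    define sc where "sc = sqrt c"
    have scpos: "sc > 0" unfolding sc_def using cpos by simp
    have scc: "sc * sc = c" unfolding sc_def using cpos by simp
    have scsq: "of_real sc * of_real sc = (of_real c :: complex)"
      using scc by (simp flip: of_real_mult)
    obtain n :: nat and u where nu: "\<forall>a\<in>F. \<forall>b\<in>F. A a b - A a a0 * A a0 b / A a0 a0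
          = (\<Sum>m<n. cnj (u m a) * u m b)"
      using insert.IH[OF psd_schur[OF insert.hyps insert.prems]] cpos c_def by blast
    define u' where "u' = (\<lambda>m x. case m of 0 \<Rightarrow> (if x = a0 then of_real sc else A a0 x / of_real sc)
                          | Suc k \<Rightarrow> (if x = a0 then 0 else u k x))"
    have "A a b = (\<Sum>m<Suc n. cnj (u' m a) * u' m b)" if ab: "a \<in> ?I" "b \<in> ?I" for a b
    proof -
      have sum_eq: "(\<Sum>m<Suc n. cnj (u' m a) * u' m b) =
          cnj (u' 0 a) * u' 0 b + (\<Sum>m<n. cnj (u' (Suc m) a) * u' (Suc m) b)"
        by (rule sum.lessThan_Suc_shift)
      show ?thesis
      proof (cases "a = a0")
        case a: True
        show ?thesis
        proof (cases "b = a0")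
          case True
          then show ?thesis using a sum_eq Ac scsq by (simp add: u'_def)
        next
          case False
          then show ?thesis using a sum_eq scpos by (simp add: u'_def)
        qed
      next
        case a: False
        then have aF: "a \<in> F" using ab by simp
        show ?thesis
        proof (cases "b = a0")
          case True
          have "A a a0 = cnj (A a0 a)" using herm[of a0 a] ab by simp
          then show ?thesis using a True sum_eq scpos by (simp add: u'_def)
        next
          case False
          then have bF: "b \<in> F" using ab by simp
          have e: "A a b - A a a0 * A a0 b / A a0 a0 = (\<Sum>m<n. cnj (u m a) * u m b)"
            using nu aF bF by blast
          then have e2: "A a b = (\<Sum>m<n. cnj (u m a) * u m b) + A a a0 * A a0 b / A a0 a0"
            by (simp only: diff_eq_eq)
          have ha: "A a a0 = cnj (A a0 a)" using herm[of a0 a] ab by simp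
          have "cnj (u' 0 a) * u' 0 b = (cnj (A a0 a) / of_real sc) * (A a0 b / of_real sc)"
            using a False by (simp add: u'_def)
          also have "\<dots> = cnj (A a0 a) * A a0 b / (of_real sc * of_real sc)"
            by (simp only: times_divide_times_eq)
          also have "\<dots> = A a a0 * A a0 b / A a0 a0"
            by (simp only: scsq Ac ha)
          finally have u0: "cnj (u' 0 a) * u' 0 b = A a a0 * A a0 b / A a0 a0" .
          have us: "(\<Sum>m<n. cnj (u' (Suc m) a) * u' (Suc m) b) = (\<Sum>m<n. cnj (u m a) * u m b)"
            using a False by (simp add: u'_def)
          show ?thesis unfolding sum_eq u0 us e2 by (simp only: add.commute)
        qed
      qed
    qed
    then show ?thesis by blast
  qed
qed




lemma qf_lin2: "qf I (\<lambda>i j. a * A i j + b * B i j) v = a * qf I A v + b * qf I B v"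
  unfolding qf_def by (simp add: algebra_simps sum.distrib sum_distrib_left)

lemma qf_linsum: "qf I (\<lambda>i j. \<Sum>k<n. c k * A k i j) v = (\<Sum>k<n. c k * qf I (A k) v)"
proof -
  have "qf I (\<lambda>i j. \<Sum>k<n. c k * A k i j) v = (\<Sum>i\<in>I. \<Sum>j\<in>I. \<Sum>k<n. c k * (cnj (v i) * A k i j * v j))"
    unfolding qf_def by (intro sum.cong refl) (simp add: sum_distrib_left sum_distrib_right mult_ac)
  also have "\<dots> = (\<Sum>i\<in>I. \<Sum>k<n. \<Sum>j\<in>I. c k * (cnj (v i) * A k i j * v j))"
    by (intro sum.cong refl sum.swap)
  also have "\<dots> = (\<Sum>k<n. \<Sum>i\<in>I. \<Sum>j\<in>I. c k * (cnj (v i) * A k i j * v j))"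
    by (rule sum.swap)
  also have "\<dots> = (\<Sum>k<n. c k * qf I (A k) v)"
    unfolding qf_def by (simp add: sum_distrib_left)
  finally show ?thesis .
qed

lemma mix_density:
  assumes "density ds A" "density ds B" "0 \<le> p" "p \<le> 1"
  shows "density ds (mix p A B)"
proof -
  have opA: "is_op_on (Idx ds) A" and psdA: "psd_on (Idx ds) A" and trA: "tr_on (Idx ds) A = 1"
    using assms(1) by (auto simp: density_def density_on_def)
  have opB: "is_op_on (Idx ds) B" and psdB: "psd_on (Idx ds) B" and trB: "tr_on (Idx ds) B = 1"
    using assms(2) by (auto simp: density_def density_on_def)
  have op: "is_op_on (Idx ds) (mix p A B)"
    using opA opB by (simp add: is_op_on_def mix_def)
  have tr: "tr_on (Idx ds) (mix p A B) = 1"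
    using trA trB unfolding tr_on_def mix_def
    by (simp add: sum.distrib sum_distrib_left[symmetric])
  have psd: "psd_on (Idx ds) (mix p A B)"
    unfolding psd_qf
  proof
    fix v
    have e: "qf (Idx ds) (mix p A B) v = of_real p * qf (Idx ds) A v + of_real (1 - p) * qf (Idx ds) B v"
      unfolding mix_def by (rule qf_lin2)
    show "0 \<le> Re (qf (Idx ds) (mix p A B) v) \<and> Im (qf (Idx ds) (mix p A B) v) = 0"
      using psdA psdB assms(3,4) unfolding e psd_qf by simp
  qed
  show ?thesis using op tr psd by (simp add: density_def density_on_def)
qed

lemma nth_map_upt': "k < n \<Longrightarrow> map g [0..<n] ! k = g k"
  by simp

lemma idx_bij: "bij_betw (\<lambda>g. map g [0..<length ds]) (PiE {..<length ds} (\<lambda>k. {..<ds!k})) (Idx ds)"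
proof (rule bij_betwI')
  fix x y assume x: "x \<in> PiE {..<length ds} (\<lambda>k. {..<ds!k})" and y: "y \<in> PiE {..<length ds} (\<lambda>k. {..<ds!k})"
  show "(map x [0..<length ds] = map y [0..<length ds]) = (x = y)"
  proof
    assume m: "map x [0..<length ds] = map y [0..<length ds]"
    show "x = y"
    proof (rule PiE_ext[OF x y])
      fix k assume "k \<in> {..<length ds}"
      then show "x k = y k" using m by (metis lessThan_iff nth_map_upt')
    qed
  qed simp
next
  fix x assume "x \<in> PiE {..<length ds} (\<lambda>k. {..<ds!k})"
  then show "map x [0..<length ds] \<in> Idx ds" by (auto simp: Idx_def PiE_def Pi_def)
next
  fix i assume i: "i \<in> Idx ds"
  let ?g = "restrict (\<lambda>k. i ! k) {..<length ds}"
  have "?g \<in> PiE {..<length ds} (\<lambda>k. {..<ds!k})" using i by (auto simp: Idx_def)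
  moreover have "i = map ?g [0..<length ds]"
    using i by (intro nth_equalityI) (auto simp: Idx_def)
  ultimately show "\<exists>g\<in>PiE {..<length ds} (\<lambda>k. {..<ds!k}). i = map g [0..<length ds]" by blast
qed

lemma finite_Idx: "finite (Idx ds)"
  using bij_betw_finite[OF idx_bij] by (simp add: finite_PiE)

lemma sum_Idx_prod:
  "(\<Sum>i\<in>Idx ds. \<Prod>k<length ds. f k (i ! k)) = (\<Prod>k<length ds. \<Sum>a<ds!k. (f k a :: complex))"
proof -
  have "(\<Sum>i\<in>Idx ds. \<Prod>k<length ds. f k (i ! k)) =
        (\<Sum>g\<in>PiE {..<length ds} (\<lambda>k. {..<ds!k}). \<Prod>k<length ds. f k (map g [0..<length ds] ! k))"
    by (rule sum.reindex_bij_betw[OF idx_bij, symmetric])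
  also have "\<dots> = (\<Sum>g\<in>PiE {..<length ds} (\<lambda>k. {..<ds!k}). \<Prod>k<length ds. f k (g k))"
    by (intro sum.cong refl prod.cong) auto
  also have "\<dots> = (\<Prod>k<length ds. \<Sum>a<ds!k. f k a)"
    by (rule prod_sum_PiE[symmetric]) auto
  finally show ?thesis .
qed



lemma product_density:
  assumes "product_state ds \<rho>"
  shows "density ds \<rho>"
proof -
  obtain \<sigma> where \<sigma>: "\<forall>k<length ds. density_on {..<ds ! k} (\<sigma> k)"
    and rho: "\<rho> = (\<lambda>i j. if i \<in> Idx ds \<and> j \<in> Idx ds
                  then (\<Prod>k<length ds. \<sigma> k (i ! k) (j ! k)) else 0)"
    using assms unfolding product_state_def by blast
  have op: "is_op_on (Idx ds) \<rho>" by (simp add: is_op_on_def rho)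
  have "tr_on (Idx ds) \<rho> = (\<Sum>i\<in>Idx ds. \<Prod>k<length ds. \<sigma> k (i ! k) (i ! k))"
    unfolding tr_on_def rho by (intro sum.cong refl) simp
  also have "\<dots> = (\<Prod>k<length ds. \<Sum>a<ds!k. \<sigma> k a a)"
    by (rule sum_Idx_prod)
  also have "\<dots> = (\<Prod>k<length ds. 1)"
    using \<sigma> by (intro prod.cong refl) (simp add: density_on_def tr_on_def)
  finally have tr: "tr_on (Idx ds) \<rho> = 1" by simp
  have "\<forall>k. \<exists>NU :: nat \<times> (nat \<Rightarrow> nat \<Rightarrow> complex). k < length ds \<longrightarrow>
          (\<forall>a\<in>{..<ds!k}. \<forall>b\<in>{..<ds!k}. \<sigma> k a b = (\<Sum>m<fst NU. cnj (snd NU m a) * snd NU m b))"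
  proof
    fix k
    show "\<exists>NU :: nat \<times> (nat \<Rightarrow> nat \<Rightarrow> complex). k < length ds \<longrightarrow>
          (\<forall>a\<in>{..<ds!k}. \<forall>b\<in>{..<ds!k}. \<sigma> k a b = (\<Sum>m<fst NU. cnj (snd NU m a) * snd NU m b))"
    proof (cases "k < length ds")
      case True
      then have "psd_on {..<ds!k} (\<sigma> k)" using \<sigma> by (simp add: density_on_def)
      then obtain n :: nat and u where "\<forall>a\<in>{..<ds!k}. \<forall>b\<in>{..<ds!k}. \<sigma> k a b = (\<Sum>m<n. cnj (u m a) * u m b)"
        using cholesky[of "{..<ds!k}" "\<sigma> k"] by blast
      then show ?thesis by (intro exI[of _ "(n, u)"]) simp
    qed simp
  qed
  from choice[OF this] obtain NU :: "nat \<Rightarrow> nat \<times> (nat \<Rightarrow> nat \<Rightarrow> complex)" where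
    NU0: "\<forall>k. k < length ds \<longrightarrow> (\<forall>a\<in>{..<ds!k}. \<forall>b\<in>{..<ds!k}.
          \<sigma> k a b = (\<Sum>m<fst (NU k). cnj (snd (NU k) m a) * snd (NU k) m b))"
    by blast
  have NU: "\<And>k. k < length ds \<Longrightarrow> (\<forall>a\<in>{..<ds!k}. \<forall>b\<in>{..<ds!k}.
          \<sigma> k a b = (\<Sum>m<fst (NU k). cnj (snd (NU k) m a) * snd (NU k) m b))"
    using NU0 by blast
  define N where "N k = fst (NU k)" for k
  define U where "U k = snd (NU k)" for k
  define M where "M = PiE {..<length ds} (\<lambda>k. {..<N k})"
  define W where "W g i = (\<Prod>k<length ds. U k (g k) (i ! k))" for g and i :: "nat list"
  have fM: "finite M" by (simp add: M_def finite_PiE)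
  have "\<forall>i\<in>Idx ds. \<forall>j\<in>Idx ds. \<rho> i j = (\<Sum>g\<in>M. cnj (W g i) * W g j)"
  proof (intro ballI)
    fix i j assume i: "i \<in> Idx ds" and j: "j \<in> Idx ds"
    have "\<rho> i j = (\<Prod>k<length ds. \<sigma> k (i ! k) (j ! k))" using i j by (simp add: rho)
    also have "\<dots> = (\<Prod>k<length ds. \<Sum>m<N k. cnj (U k m (i ! k)) * U k m (j ! k))"
    proof (intro prod.cong refl)
      fix k assume "k \<in> {..<length ds}"
      then have k: "k < length ds" by simp
      then have "i ! k \<in> {..<ds!k}" "j ! k \<in> {..<ds!k}" using i j by (auto simp: Idx_def)
      then show "\<sigma> k (i ! k) (j ! k) = (\<Sum>m<N k. cnj (U k m (i ! k)) * U k m (j ! k))"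
        using NU[OF k] unfolding N_def U_def by blast
    qed
    also have "\<dots> = (\<Sum>g\<in>M. \<Prod>k<length ds. cnj (U k (g k) (i ! k)) * U k (g k) (j ! k))"
      unfolding M_def by (rule prod_sum_PiE) auto
    also have "\<dots> = (\<Sum>g\<in>M. cnj (W g i) * W g j)"
      unfolding W_def by (simp add: prod.distrib)
    finally show "\<rho> i j = (\<Sum>g\<in>M. cnj (W g i) * W g j)" .
  qed
  then have psd: "psd_on (Idx ds) \<rho>"
    by (rule gram_psd[OF fM])
  show ?thesis using op tr psd by (simp add: density_def density_on_def)
qed

lemma separable_density:
  assumes "separable ds \<rho>"
  shows "density ds \<rho>"
proof -
  obtain n :: nat and p :: "nat \<Rightarrow> real" and \<sigma> where H: "(\<forall>k<n. 0 \<le> p k \<and> product_state ds (\<sigma> k)) \<and> (\<Sum>k<n. p k) = 1 \<and>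
      \<rho> = (\<lambda>i j. \<Sum>k<n. complex_of_real (p k) * \<sigma> k i j)"
    using assms unfolding separable_def by (elim exE) metis
  have h: "\<forall>k<n. 0 \<le> p k \<and> product_state ds (\<sigma> k)" and s1: "(\<Sum>k<n. p k) = 1"
    and rho: "\<rho> = (\<lambda>i j. \<Sum>k<n. complex_of_real (p k) * \<sigma> k i j)"
    using H by simp_all
  have d: "\<And>k. k < n \<Longrightarrow> density ds (\<sigma> k)" using h by (auto intro: product_density)
  have op: "is_op_on (Idx ds) \<rho>"
    using d unfolding rho is_op_on_def by (simp add: density_def density_on_def is_op_on_def)
  have "tr_on (Idx ds) \<rho> = (\<Sum>k<n. of_real (p k) * tr_on (Idx ds) (\<sigma> k))"
    unfolding rho tr_on_def
    by (subst sum.swap) (simp add: sum_distrib_left)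
  also have "\<dots> = (\<Sum>k<n. of_real (p k))"
    using d by (intro sum.cong refl) (simp add: density_def density_on_def)
  also have "\<dots> = 1" using s1 by (metis of_real_1 of_real_sum)
  finally have tr: "tr_on (Idx ds) \<rho> = 1" .
  have psd: "psd_on (Idx ds) \<rho>"
    unfolding psd_qf
  proof
    fix v
    have e: "qf (Idx ds) \<rho> v = (\<Sum>k<n. of_real (p k) * qf (Idx ds) (\<sigma> k) v)"
      unfolding rho by (rule qf_linsum)
    have "\<And>k. k < n \<Longrightarrow> 0 \<le> Re (qf (Idx ds) (\<sigma> k) v) \<and> Im (qf (Idx ds) (\<sigma> k) v) = 0"
      using d by (simp add: density_def density_on_def psd_qf)
    then show "0 \<le> Re (qf (Idx ds) \<rho> v) \<and> Im (qf (Idx ds) \<rho> v) = 0"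
      unfolding e using h by (auto intro!: sum_nonneg)
  qed
  show ?thesis using op tr psd by (simp add: density_def density_on_def)
qed



lemma dist_nonneg: "distance ds D \<Longrightarrow> density ds a \<Longrightarrow> density ds b \<Longrightarrow> 0 \<le> D a b"
  unfolding distance_def by blast
lemma dist_self: "distance ds D \<Longrightarrow> density ds a \<Longrightarrow> D a a = 0"
  unfolding distance_def by blast
lemma dist_sym: "distance ds D \<Longrightarrow> density ds a \<Longrightarrow> density ds b \<Longrightarrow> D a b = D b a"
  unfolding distance_def by blast
lemma dist_tri: "distance ds D \<Longrightarrow> density ds a \<Longrightarrow> density ds b \<Longrightarrow> density ds c \<Longrightarrow> D a c \<le> D a b + D b c"
  unfolding distance_def by blast

lemma E_D_lower:
  assumes "distance ds D" "density ds \<tau>" "separable ds \<sigma>"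
  shows "E_D ds D \<tau> \<le> D \<tau> \<sigma>"
  unfolding E_D_def
proof (rule cInf_lower)
  show "D \<tau> \<sigma> \<in> {D \<tau> \<sigma> |\<sigma>. separable ds \<sigma>}" using assms(3) by blast
  show "bdd_below {D \<tau> \<sigma> |\<sigma>. separable ds \<sigma>}"
    using assms(1,2) by (intro bdd_belowI[of _ 0]) (auto intro: dist_nonneg separable_density)
qed

lemma E_D_nonneg:
  assumes "distance ds D" "density ds \<tau>" "separable ds \<sigma>0"
  shows "0 \<le> E_D ds D \<tau>"
  unfolding E_D_def
  using assms by (intro cInf_greatest) (auto intro: dist_nonneg separable_density)

lemma E_D_tri:
  assumes "distance ds D" "density ds a" "density ds b" "separable ds \<sigma>" "D b \<sigma> = E_D ds D b"
  shows "E_D ds D a \<le> D a b + E_D ds D b"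
proof -
  have "E_D ds D a \<le> D a \<sigma>" by (rule E_D_lower[OF assms(1,2,4)])
  also have "\<dots> \<le> D a b + D b \<sigma>"
    by (rule dist_tri[OF assms(1,2,3) separable_density[OF assms(4)]])
  finally show ?thesis using assms(5) by simp
qed

lemma mix_1: "mix 1 A B = A" by (simp add: mix_def)

lemma mix_mix: "mix l X (mix s X Y) i j =
   complex_of_real (l + (1 - l) * s) * X i j + complex_of_real ((1 - l) * (1 - s)) * Y i j"
  by (simp add: mix_def algebra_simps)

lemma mix_split:
  assumes "0 \<le> s" "s < 1" "s \<le> t"
  shows "mix t X Y = mix ((t - s) / (1 - s)) X (mix s X Y)"
proof -
  have ne: "1 - s \<noteq> 0" using assms by simp
  have l1: "1 - (t - s) / (1 - s) = (1 - t) / (1 - s)"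
    using ne by (simp add: field_simps)
  have p: "(t - s) + (1 - t) * s = t * (1 - s)" by (simp add: algebra_simps)
  have "(t - s) / (1 - s) + (1 - (t - s) / (1 - s)) * s = ((t - s) + (1 - t) * s) / (1 - s)"
    unfolding l1 by (simp add: add_divide_distrib)
  also have "\<dots> = t" unfolding p using ne by simp
  finally have a: "(t - s) / (1 - s) + (1 - (t - s) / (1 - s)) * s = t" .
  have b: "(1 - (t - s) / (1 - s)) * (1 - s) = 1 - t"
    unfolding l1 using ne by simp
  show ?thesis
  proof (rule ext, rule ext)
    fix i j
    have "mix ((t - s) / (1 - s)) X (mix s X Y) i j =
        complex_of_real ((t - s) / (1 - s) + (1 - (t - s) / (1 - s)) * s) * X i j
        + complex_of_real ((1 - (t - s) / (1 - s)) * (1 - s)) * Y i j"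
      by (rule mix_mix)
    also have "\<dots> = mix t X Y i j" unfolding a b mix_def by simp
    finally show "mix t X Y i j = mix ((t - s) / (1 - s)) X (mix s X Y) i j" by simp
  qed
qed



lemma mix_0: "mix 0 A B = B" by (simp add: mix_def)

theorem mainTheorem9:
  fixes ds :: "nat list"
    and E :: "nat list cmat \<Rightarrow> real"
    and D :: "nat list cmat \<Rightarrow> nat list cmat \<Rightarrow> real"
    and \<rho> :: "nat list cmat"
    and \<epsilon> :: real
  assumes multipartite: "2 \<le> length ds"
    and E_nonneg: "\<forall>\<sigma>. density ds \<sigma> \<longrightarrow> 0 \<le> E \<sigma>"
    and E_weak: "weak_entanglement_measure ds E"
    and E_convex: "convex_measure ds E"
    and D_dist: "distance ds D"
    and D_contr: "contractive ds D"
    and D_convex: "convex_each_arg ds D"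
    and D_attained: "\<forall>\<tau>. density ds \<tau> \<longrightarrow> (\<exists>\<sigma>. separable ds \<sigma> \<and> D \<tau> \<sigma> = E_D ds D \<tau>)"
    and rho: "density ds \<rho>"
    and pos: "E_D ds D \<rho> > 0"
    and eps: "0 \<le> \<epsilon>" "\<epsilon> \<le> E_D ds D \<rho>"
  shows "Inf {E \<tau> | \<tau>. density ds \<tau> \<and> E_D ds D \<tau> = E_D ds D \<rho> - \<epsilon>} \<le> E_eps ds E D \<epsilon> \<rho>
       \<and> E_eps ds E D \<epsilon> \<rho> \<le> (1 - \<epsilon> / E_D ds D \<rho>) * E \<rho>"
proof -
  define d where "d = E_D ds D \<rho>"
  have dpos: "d > 0" using pos d_def by simp
  have att: "\<And>\<tau>. density ds \<tau> \<Longrightarrow> \<exists>\<sigma>. separable ds \<sigma> \<and> D \<tau> \<sigma> = E_D ds D \<tau>"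
    using D_attained by blast
  have Ezero: "\<And>\<sigma>. separable ds \<sigma> \<Longrightarrow> E \<sigma> = 0"
    using E_weak unfolding weak_entanglement_measure_def by blast
  have Econv: "\<And>a b p. density ds a \<Longrightarrow> density ds b \<Longrightarrow> 0 \<le> p \<Longrightarrow> p \<le> 1 \<Longrightarrow>
      E (mix p a b) \<le> p * E a + (1 - p) * E b"
    using E_convex unfolding convex_measure_def by blast
  have Dconv1: "\<And>a b c p. density ds a \<Longrightarrow> density ds b \<Longrightarrow> density ds c \<Longrightarrow> 0 \<le> p \<Longrightarrow> p \<le> 1 \<Longrightarrow>
      D (mix p a b) c \<le> p * D a c + (1 - p) * D b c"
    using D_convex unfolding convex_each_arg_def by blast
  have Dconv2: "\<And>a b c p. density ds a \<Longrightarrow> density ds b \<Longrightarrow> density ds c \<Longrightarrow> 0 \<le> p \<Longrightarrow> p \<le> 1 \<Longrightarrow>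
      D c (mix p a b) \<le> p * D c a + (1 - p) * D c b"
    using D_convex unfolding convex_each_arg_def by blast
  obtain \<sigma>s where \<sigma>s: "separable ds \<sigma>s" "D \<rho> \<sigma>s = d"
    using att[OF rho] d_def by blast
  have d\<sigma>s: "density ds \<sigma>s" using \<sigma>s(1) by (rule separable_density)
  have D\<rho>\<rho>: "D \<rho> \<rho> = 0" using dist_self[OF D_dist rho] .

  let ?S2 = "{E \<sigma> | \<sigma>. density ds \<sigma> \<and> D \<rho> \<sigma> \<le> \<epsilon>}"
  have S2_bdd: "bdd_below ?S2" using E_nonneg by (intro bdd_belowI[of _ 0]) auto
  have S2_ne: "?S2 \<noteq> {}" using rho D\<rho>\<rho> eps(1) by auto
  have Eeps_le: "E_eps ds E D \<epsilon> \<rho> \<le> E \<tau>" if "density ds \<tau>" "D \<rho> \<tau> \<le> \<epsilon>" for \<tau>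
    unfolding E_eps_def by (rule cInf_lower[OF _ S2_bdd]) (use that in blast)

  define p where "p = \<epsilon> / d"
  have p0: "0 \<le> p" using eps dpos by (simp add: p_def)
  have p1: "p \<le> 1" using eps dpos d_def by (simp add: p_def)
  have pd: "p * d = \<epsilon>" using dpos by (simp add: p_def)
  define \<tau> where "\<tau> = mix p \<sigma>s \<rho>"
  have d\<tau>: "density ds \<tau>" unfolding \<tau>_def by (rule mix_density[OF d\<sigma>s rho p0 p1])
  have "D \<rho> \<tau> \<le> p * D \<rho> \<sigma>s + (1 - p) * D \<rho> \<rho>"
    unfolding \<tau>_def by (rule Dconv2[OF d\<sigma>s rho rho p0 p1])
  then have D\<tau>: "D \<rho> \<tau> \<le> \<epsilon>" using \<sigma>s(2) D\<rho>\<rho> pd by simp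
  have "E \<tau> \<le> p * E \<sigma>s + (1 - p) * E \<rho>"
    unfolding \<tau>_def by (rule Econv[OF d\<sigma>s rho p0 p1])
  then have E\<tau>: "E \<tau> \<le> (1 - \<epsilon> / E_D ds D \<rho>) * E \<rho>"
    using Ezero[OF \<sigma>s(1)] by (simp add: p_def d_def)
  have upper: "E_eps ds E D \<epsilon> \<rho> \<le> (1 - \<epsilon> / E_D ds D \<rho>) * E \<rho>"
    using Eeps_le[OF d\<tau> D\<tau>] E\<tau> by linarith

  let ?S1 = "{E \<tau> | \<tau>. density ds \<tau> \<and> E_D ds D \<tau> = E_D ds D \<rho> - \<epsilon>}"
  have S1_bdd: "bdd_below ?S1" using E_nonneg by (intro bdd_belowI[of _ 0]) auto
  have key: "Inf ?S1 \<le> E \<sigma>" if d\<sigma>: "density ds \<sigma>" and D\<sigma>: "D \<rho> \<sigma> \<le> \<epsilon>" for \<sigma>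
  proof -
    obtain \<sigma>' where \<sigma>': "separable ds \<sigma>'" "D \<sigma> \<sigma>' = E_D ds D \<sigma>"
      using att[OF d\<sigma>] by blast
    have d\<sigma>': "density ds \<sigma>'" using \<sigma>'(1) by (rule separable_density)
    define K where "K = D \<sigma> \<sigma>'"
    have K0: "0 \<le> K" unfolding K_def by (rule dist_nonneg[OF D_dist d\<sigma> d\<sigma>'])
    define f where "f t = E_D ds D (mix t \<sigma>' \<sigma>)" for t
    have dens: "density ds (mix t \<sigma>' \<sigma>)" if "0 \<le> t" "t \<le> 1" for t
      by (rule mix_density[OF d\<sigma>' d\<sigma> that])
    have Lip1: "D (mix s \<sigma>' \<sigma>) (mix t \<sigma>' \<sigma>) \<le> (t - s) * K"
      if st: "0 \<le> s" "s \<le> t" "t \<le> 1" for s t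
    proof (cases "s = 1")
      case True
      then have "t = 1" using st by simp
      then show ?thesis using True dist_self[OF D_dist dens[of 1]] by simp
    next
      case False
      then have s1: "s < 1" using st by simp
      define l where "l = (t - s) / (1 - s)"
      have l0: "0 \<le> l" using st s1 by (simp add: l_def)
      have l1: "l \<le> 1" using st s1 by (simp add: l_def)
      have ls: "l * (1 - s) = t - s" using s1 by (simp add: l_def)
      have ds: "density ds (mix s \<sigma>' \<sigma>)" using st by (intro dens) auto
      have eq: "mix t \<sigma>' \<sigma> = mix l \<sigma>' (mix s \<sigma>' \<sigma>)"
        unfolding l_def using st s1 by (intro mix_split) auto
      have "D (mix s \<sigma>' \<sigma>) (mix t \<sigma>' \<sigma>) \<le> l * D (mix s \<sigma>' \<sigma>) \<sigma>' + (1 - l) * D (mix s \<sigma>' \<sigma>) (mix s \<sigma>' \<sigma>)"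
        unfolding eq by (rule Dconv2[OF d\<sigma>' ds ds l0 l1])
      also have "\<dots> = l * D (mix s \<sigma>' \<sigma>) \<sigma>'"
        using dist_self[OF D_dist ds] by simp
      also have "\<dots> \<le> l * ((1 - s) * K)"
      proof (rule mult_left_mono[OF _ l0])
        have "D (mix s \<sigma>' \<sigma>) \<sigma>' \<le> s * D \<sigma>' \<sigma>' + (1 - s) * D \<sigma> \<sigma>'"
          using st s1 by (intro Dconv1[OF d\<sigma>' d\<sigma> d\<sigma>']) auto
        then show "D (mix s \<sigma>' \<sigma>) \<sigma>' \<le> (1 - s) * K"
          using dist_self[OF D_dist d\<sigma>'] K_def by simp
      qed
      also have "\<dots> = (t - s) * K" using ls by (simp add: mult.assoc[symmetric])
      finally show ?thesis .
    qed
    have attm: "\<exists>x. separable ds x \<and> D (mix t \<sigma>' \<sigma>) x = E_D ds D (mix t \<sigma>' \<sigma>)"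
      if "0 \<le> t" "t \<le> 1" for t
      using att[OF dens[OF that]] .
    have Lip2: "\<bar>f s - f t\<bar> \<le> (t - s) * K" if st: "0 \<le> s" "s \<le> t" "t \<le> 1" for s t
    proof -
      have ds: "density ds (mix s \<sigma>' \<sigma>)" and dt: "density ds (mix t \<sigma>' \<sigma>)"
        using st by (auto intro!: dens)
      obtain xs where xs: "separable ds xs" "D (mix s \<sigma>' \<sigma>) xs = f s"
        using attm[of s] st unfolding f_def by auto
      obtain xt where xt: "separable ds xt" "D (mix t \<sigma>' \<sigma>) xt = f t"
        using attm[of t] st unfolding f_def by auto
      have 1: "f s \<le> D (mix s \<sigma>' \<sigma>) (mix t \<sigma>' \<sigma>) + f t"
        unfolding f_def by (rule E_D_tri[OF D_dist ds dt xt(1)]) (use xt(2) f_def in simp)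
      have 2: "f t \<le> D (mix t \<sigma>' \<sigma>) (mix s \<sigma>' \<sigma>) + f s"
        unfolding f_def by (rule E_D_tri[OF D_dist dt ds xs(1)]) (use xs(2) f_def in simp)
      have 3: "D (mix t \<sigma>' \<sigma>) (mix s \<sigma>' \<sigma>) = D (mix s \<sigma>' \<sigma>) (mix t \<sigma>' \<sigma>)"
        by (rule dist_sym[OF D_dist dt ds])
      show ?thesis using 1 2 3 Lip1[OF st] by linarith
    qed
    have "K-lipschitz_on {0..1} f"
    proof (rule lipschitz_onI[OF _ K0])
      fix x y :: real assume x: "x \<in> {0..1}" and y: "y \<in> {0..1}"
      show "dist (f x) (f y) \<le> K * dist x y"
      proof (cases "x \<le> y")
        case True
        then show ?thesis using Lip2[of x y] x y by (simp add: dist_real_def mult.commute)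
      next
        case False
        then show ?thesis using Lip2[of y x] x y by (simp add: dist_real_def abs_minus_commute mult.commute)
      qed
    qed
    then have cont: "continuous_on {0..1} f" by (rule lipschitz_on_continuous_on)
    have f1: "f 1 = 0"
    proof -
      have "f 1 = E_D ds D \<sigma>'" unfolding f_def mix_1 ..
      moreover have "E_D ds D \<sigma>' \<le> D \<sigma>' \<sigma>'" by (rule E_D_lower[OF D_dist d\<sigma>' \<sigma>'(1)])
      moreover have "0 \<le> E_D ds D \<sigma>'" by (rule E_D_nonneg[OF D_dist d\<sigma>' \<sigma>'(1)])
      ultimately show ?thesis using dist_self[OF D_dist d\<sigma>'] by simp
    qed
    have f0: "d - \<epsilon> \<le> f 0"
    proof -
      have "f 0 = E_D ds D \<sigma>" unfolding f_def mix_0 ..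
      moreover have "d \<le> D \<rho> \<sigma> + E_D ds D \<sigma>"
        unfolding d_def by (rule E_D_tri[OF D_dist rho d\<sigma> \<sigma>'])
      ultimately show ?thesis using D\<sigma> by simp
    qed
    obtain t where t: "0 \<le> t" "t \<le> 1" "f t = d - \<epsilon>"
      using IVT2'[of f 1 "d - \<epsilon>" 0, OF _ f0 _ cont] f1 eps d_def by auto
    define \<tau>' where "\<tau>' = mix t \<sigma>' \<sigma>"
    have d\<tau>': "density ds \<tau>'" unfolding \<tau>'_def using t by (intro dens) auto
    have "Inf ?S1 \<le> E \<tau>'"
    proof (rule cInf_lower[OF _ S1_bdd])
      show "E \<tau>' \<in> ?S1" using d\<tau>' t(3) unfolding \<tau>'_def f_def d_def by blast
    qed
    also have "E \<tau>' \<le> t * E \<sigma>' + (1 - t) * E \<sigma>"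
      unfolding \<tau>'_def by (rule Econv[OF d\<sigma>' d\<sigma> t(1,2)])
    also have "\<dots> \<le> E \<sigma>"
    proof -
      have "0 \<le> E \<sigma>" using E_nonneg d\<sigma> by blast
      then have "0 \<le> t * E \<sigma>" using t(1) by simp
      then show ?thesis using Ezero[OF \<sigma>'(1)] by (simp add: algebra_simps)
    qed
    finally show ?thesis .
  qed
  have lower: "Inf ?S1 \<le> E_eps ds E D \<epsilon> \<rho>"
    unfolding E_eps_def by (rule cInf_greatest[OF S2_ne]) (use key in blast)
  show ?thesis using lower upper by blast
qed


end
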